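(* If the equations $\frac{u(\mathfrak{z}_2)-u(\mathfrak{z}_1)}{u(\mathfrak{z}_3)-u(\mathfrak{z}_2)}=\frac{v(\mathfrak{z}_3)-v(\mathfrak{z}_2)}{v(\mathfrak{z}_1)-v(\mathfrak{z}_3)}$ hold on all positively oriented elementary triangles, then the constraints \[ \alpha u=k\frac{f_0g_0f_3}{f_0g_0+g_0f_3+f_3g_3}+\ell\frac{f_2g_2f_5}{f_2g_2+g_2f_5+f_5g_5}+m\frac{f_4g_4f_1}{f_4g_4+g_4f_1+f_1g_1}, \] \[ \beta v=k\frac{g_0f_3g_3}{f_0g_0+g_0f_3+f_3g_3}+\ell\frac{g_2f_5g_5}{f_2g_2+g_2f_5+f_5g_5}+m\frac{g_4f_1g_1}{f_4g_4+g_4f_1+f_1g_1} \] (at every vertex) imply a similar equation for the field $w$ (vanishing at $\mathfrak{z}=0$): \begin{equation} \gamma w=k\frac{1}{f_0g_0+g_0f_3+f_3g_3}+\ell\frac{1}{f_2g_2+g_2f_5+f_5g_5}+m\frac{1}{f_4g_4+g_4f_1+f_1g_1}, \end{equation} where $\gamma=1-\alpha-\beta$.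
   Context: On the regular triangular lattice with vertices $\mathfrak{z}=k+\ell\omega+m\omega^2$ ($\omega=e^{2\pi i/3}$), $u,v$ are complex functions on vertices vanishing at $\mathfrak{z}=0$, and $w$ is the third field: $w(\mathfrak{z}_2)-w(\mathfrak{z}_1)=1/\big((u(\mathfrak{z}_2)-u(\mathfrak{z}_1))(v(\mathfrak{z}_2)-v(\mathfrak{z}_1))\big)$ for every positively oriented edge $(\mathfrak{z}_1,\mathfrak{z}_2)$ (i.e. $\mathfrak{z}_2-\mathfrak{z}_1\in\{1,\omega,\omega^2\}$), with $w(0)=0$. Positively oriented elementary triangles have consecutive vertices with differences in $\{1,\omega,\omega^2\}$. At a vertex $\mathfrak{z}$ with representative $(k,\ell,m)$, $u=u(\mathfrak{z})$, $v=v(\mathfrak{z})$, $w=w(\mathfrak{z})$, and for the edges $\mathfrak{e}_0=(\mathfrak{z},\mathfrak{z}+1)$, $\mathfrak{e}_2=(\mathfrak{z},\mathfrak{z}+\omega)$, $\mathfrak{e}_4=(\mathfrak{z},\mathfrak{z}+\omega^2)$, $\mathfrak{e}_1=(\mathfrak{z}-\omega^2,\mathfrak{z})$, $\mathfrak{e}_3=(\mathfrak{z}-1,\mathfrak{z})$, $\mathfrak{e}_5=(\mathfrak{z}-\omega,\mathfrak{z})$, $f_j$, $g_j$ are the increments of $u$, $v$ along $\mathfrak{e}_j$ (end minus start). $\alpha,\beta\in\mathbb C$. *)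

theory Defs
  imports Complex_Main
begin

definition omega :: complex where
  "omega = cis (2 * pi / 3)"

definition vtx :: "int \<Rightarrow> int \<Rightarrow> int \<Rightarrow> complex" where
  "vtx k l m = of_int k + of_int l * omega + of_int m * omega ^ 2"

definition lattice :: "complex set" where
  "lattice = {z. \<exists>k l m. z = vtx k l m}"

definition posdir :: "complex set" where
  "posdir = {1, omega, omega ^ 2}"

text \<open>Increment (end minus start) of a field F along the edge e_j at vertex z:
  e0=(z,z+1), e2=(z,z+omega), e4=(z,z+omega^2),
  e1=(z-omega^2,z), e3=(z-1,z), e5=(z-omega,z).\<close>
definition incr :: "(complex \<Rightarrow> complex) \<Rightarrow> complex \<Rightarrow> nat \<Rightarrow> complex" where
  "incr F z j =
     (if j = 0 then F (z + 1) - F z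
      else if j = 2 then F (z + omega) - F z
      else if j = 4 then F (z + omega ^ 2) - F z
      else if j = 1 then F z - F (z - omega ^ 2)
      else if j = 3 then F z - F (z - 1)
      else F z - F (z - omega))"

definition dnm :: "(complex \<Rightarrow> complex) \<Rightarrow> (complex \<Rightarrow> complex) \<Rightarrow> complex \<Rightarrow> nat \<Rightarrow> nat \<Rightarrow> complex" where
  "dnm u v z a b = incr u z a * incr v z a + incr v z a * incr u z b + incr u z b * incr v z b"

end

theory Submission
  imports Defs
begin

definition Q :: "complex \<Rightarrow> complex \<Rightarrow> complex \<Rightarrow> complex \<Rightarrow> complex" where
 "Q a b c d = a*b + b*c + c*d"

lemma phiA:
  fixes f0 g0 f1 g1 f2 g2 f5 g5 :: complex
  assumes h05: "Q f0 g0 f5 g5 = 0" and h01: "Q f0 g0 f1 g1 = 0" and h21: "Q f2 g2 f1 g1 = 0"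
    and nf: "f0 \<noteq> 0" and ng: "g0 \<noteq> 0" and nD: "Q f2 g2 f5 g5 \<noteq> 0"
  shows "f0*g0*(1/Q f2 g2 f5 g5) + (f2*g2*f5/Q f2 g2 f5 g5)/f0 + (g2*f5*g5/Q f2 g2 f5 g5)/g0
       = (f0*f0+f0*f5+f1*f5)/(f0*(f1-f5))"
proof -
  have eD: "Q f2 g2 f5 g5 = (g0-g2)*(f1-f5)"
    using h05 h01 h21 unfolding Q_def by algebra
  have a: "g0 - g2 \<noteq> 0" "f1 - f5 \<noteq> 0" using nD eD by auto
  have M: "f0*g0*(f0*g0) + f2*g2*f5*g0 + g2*f5*g5*f0 = g0*(g0-g2)*(f5*(f0+f1)+f0*f0)"
    using h05 h01 h21 unfolding Q_def by algebra
  let ?D = "Q f2 g2 f5 g5"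
  have "f0*g0*(1/?D) + (f2*g2*f5/?D)/f0 + (g2*f5*g5/?D)/g0
     = (f0*g0*(f0*g0) + f2*g2*f5*g0 + g2*f5*g5*f0)/(?D*(f0*g0))"
    using nf ng nD by (simp add: field_simps)
  also have "\<dots> = (g0*(g0-g2))*(f0*f0+f0*f5+f1*f5)/((g0*(g0-g2))*(f0*(f1-f5)))"
  proof -
    have e1: "?D*(f0*g0) = (g0*(g0-g2))*(f0*(f1-f5))" unfolding eD by (simp add: algebra_simps)
    have e2: "f0*g0*(f0*g0) + f2*g2*f5*g0 + g2*f5*g5*f0 = (g0*(g0-g2))*(f0*f0+f0*f5+f1*f5)"
      unfolding M by (simp add: algebra_simps)
    show ?thesis unfolding e1 e2 ..
  qed
  also have "\<dots> = (f0*f0+f0*f5+f1*f5)/(f0*(f1-f5))"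
    using a nf ng by (subst mult_divide_mult_cancel_left) auto
  finally show ?thesis .
qed

lemma link:
  fixes f0 g0 f1 g1 f5 g5 :: complex
  assumes h05: "Q f0 g0 f5 g5 = 0" and h01: "Q f0 g0 f1 g1 = 0"
    and nf: "f0 \<noteq> 0" and ng: "g0 \<noteq> 0" and a: "f1 \<noteq> f5" and b: "g1 \<noteq> g5"
  shows "(f0*f0+f0*f5+f1*f5)/(f0*(f1-f5)) = (g1*g5+g0*g0+g0*g5)/(g0*(g1-g5))"
proof -
  have "(f0*f0+f0*f5+f1*f5)*(g0*(g1-g5)) = (g1*g5+g0*g0+g0*g5)*(f0*(f1-f5))"
    using h05 h01 unfolding Q_def by algebra
  then show ?thesis using nf ng a b by (subst frac_eq_eq) auto
qed

lemma Qneg: "Q (-a) (-b) (-c) (-d) = Q d c b a" unfolding Q_def by (simp add: algebra_simps)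

lemma eDA:
  fixes f0 g0 f1 g1 f2 g2 f5 g5 :: complex
  assumes h05: "Q f0 g0 f5 g5 = 0" and h01: "Q f0 g0 f1 g1 = 0" and h21: "Q f2 g2 f1 g1 = 0"
  shows "Q f2 g2 f5 g5 = (g0-g2)*(f1-f5)"
    using h05 h01 h21 unfolding Q_def by algebra

lemma phiB:
  fixes f3 g3 f4 g4 f2 g2 f5 g5 :: complex
  assumes h23: "Q f2 g2 f3 g3 = 0" and h43: "Q f4 g4 f3 g3 = 0" and h45: "Q f4 g4 f5 g5 = 0"
    and nf: "f3 \<noteq> 0" and ng: "g3 \<noteq> 0" and nD: "Q f2 g2 f5 g5 \<noteq> 0"
  shows "f3*g3*(1/Q f2 g2 f5 g5) + (f2*g2*f5/Q f2 g2 f5 g5)/f3 + (g2*f5*g5/Q f2 g2 f5 g5)/g3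
       = (g3*g3+g3*g2+g4*g2)/(g3*(g4-g2))"
proof -
  have "(-g3)*(-f3)*(1/Q (-g5) (-f5) (-g2) (-f2)) + ((-g5)*(-f5)*(-g2)/Q (-g5) (-f5) (-g2) (-f2))/(-g3)
     + ((-f5)*(-g2)*(-f2)/Q (-g5) (-f5) (-g2) (-f2))/(-f3)
       = ((-g3)*(-g3)+(-g3)*(-g2)+(-g4)*(-g2))/((-g3)*((-g4)-(-g2)))"
    by (rule phiA[where ?f0.0="-g3" and ?g0.0="-f3" and ?f1.0="-g4" and ?g1.0="-f4" and ?f2.0="-g5" and ?g2.0="-f5" and ?f5.0="-g2" and ?g5.0="-f2"]) (use assms in \<open>simp_all add: Qneg\<close>)
  then have "f3*g3*(1/Q f2 g2 f5 g5) + (g5*f5*g2/Q f2 g2 f5 g5)/g3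
     + (f5*g2*f2/Q f2 g2 f5 g5)/f3 = (g3*g3+g3*g2+g4*g2)/(g3*(g4-g2))"
    by (simp add: Qneg algebra_simps)
  then show ?thesis by (simp add: ac_simps)
qed

lemma pairlemma:
  fixes f0 g0 f1 g1 f2 g2 f5 g5 f5' g5' :: complex
  assumes h05: "Q f0 g0 f5 g5 = 0" and h01: "Q f0 g0 f1 g1 = 0" and h21: "Q f2 g2 f1 g1 = 0"
    and h45': "Q (-(f0+f5)) (-(g0+g5)) f5' g5' = 0"
    and nf: "f0 \<noteq> 0" and ng: "g0 \<noteq> 0" and nD: "Q f2 g2 f5 g5 \<noteq> 0"
    and nD': "Q (-(f0+f1)) (-(g0+g1)) f5' g5' \<noteq> 0"
  shows "f0*g0*(1/Q (-(f0+f1)) (-(g0+g1)) f5' g5')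
     + ((-(f0+f1))*(-(g0+g1))*f5'/Q (-(f0+f1)) (-(g0+g1)) f5' g5')/f0
     + ((-(g0+g1))*f5'*g5'/Q (-(f0+f1)) (-(g0+g1)) f5' g5')/g0
   = f0*g0*(1/Q f2 g2 f5 g5) + (f2*g2*f5/Q f2 g2 f5 g5)/f0 + (g2*f5*g5/Q f2 g2 f5 g5)/g0"
proof -
  have A: "f0*g0*(1/Q f2 g2 f5 g5) + (f2*g2*f5/Q f2 g2 f5 g5)/f0 + (g2*f5*g5/Q f2 g2 f5 g5)/g0
       = (f0*f0+f0*f5+f1*f5)/(f0*(f1-f5))"
    by (rule phiA) (use assms in auto)
  have "Q f2 g2 f5 g5 = (g0-g2)*(f1-f5)" by (rule eDA) (use assms in auto)
  then have n1: "f1 \<noteq> f5" using nD by auto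
  have q1: "Q (-(f0+f1)) (-(g0+g1)) f0 g0 = 0" using h01 unfolding Q_def by algebra
  have q2: "Q (-(f0+f5)) (-(g0+g5)) f0 g0 = 0" using h05 unfolding Q_def by algebra
  have B: "f0*g0*(1/Q (-(f0+f1)) (-(g0+g1)) f5' g5')
     + ((-(f0+f1))*(-(g0+g1))*f5'/Q (-(f0+f1)) (-(g0+g1)) f5' g5')/f0
     + ((-(g0+g1))*f5'*g5'/Q (-(f0+f1)) (-(g0+g1)) f5' g5')/g0
     = (g0*g0+g0*(-(g0+g1))+(-(g0+g5))*(-(g0+g1)))/(g0*((-(g0+g5))-(-(g0+g1))))"
    by (rule phiB[where ?f4.0="-(f0+f5)" and ?g4.0="-(g0+g5)" and ?f3.0=f0 and ?g3.0=g0]) (use assms q1 q2 in auto)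
  have "Q (-(f0+f1)) (-(g0+g1)) f5' g5' = (f0 - f5')*((-(g0+g5))-(-(g0+g1)))"
    using q1 q2 h45' unfolding Q_def by algebra
  then have n2: "g1 \<noteq> g5" using nD' by auto
  have L: "(f0*f0+f0*f5+f1*f5)/(f0*(f1-f5)) = (g1*g5+g0*g0+g0*g5)/(g0*(g1-g5))"
    by (rule link) (use assms n1 n2 in auto)
  have e: "(g0*g0+g0*(-(g0+g1))+(-(g0+g5))*(-(g0+g1)))/(g0*((-(g0+g5))-(-(g0+g1))))
     = (g1*g5+g0*g0+g0*g5)/(g0*(g1-g5))"
    by (simp add: algebra_simps)
  show ?thesis using A B L e by simp
qed
lemma step_alg:
  fixes f g A1 A2 A3 B1 B2 B3 C1 C2 C3 A1' A2' A3' B1' B2' B3' C1' C2' C3' U U' V V' W W' c1 c2 c3 al be :: complex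
  assumes nf: "f \<noteq> 0" and ng: "g \<noteq> 0"
    and P1: "f*g*C1' + A1'/f + B1'/g = 1"
    and E1: "f*g*C1' + A1'/f + B1'/g = f*g*C1 + A1/f + B1/g"
    and E2: "f*g*C2' + A2'/f + B2'/g = f*g*C2 + A2/f + B2/g"
    and E3: "f*g*C3' + A3'/f + B3'/g = f*g*C3 + A3/f + B3/g"
    and hu': "al*U' = (c1+1)*A1' + c2*A2' + c3*A3'" and hu: "al*U = c1*A1 + c2*A2 + c3*A3"
    and hv': "be*V' = (c1+1)*B1' + c2*B2' + c3*B3'" and hv: "be*V = c1*B1 + c2*B2 + c3*B3"
    and hf: "U' - U = f" and hg: "V' - V = g" and hw: "W' - W = 1/(f*g)"
  shows "(1-al-be)*W' - ((c1+1)*C1' + c2*C2' + c3*C3') = (1-al-be)*W - (c1*C1 + c2*C2 + c3*C3)"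
proof -
  have ha: "(c1+1)*(A1'/f) + c2*(A2'/f) + c3*(A3'/f) - (c1*(A1/f) + c2*(A2/f) + c3*(A3/f)) = al"
  proof -
    have "al*(U'-U) = (c1+1)*A1' + c2*A2' + c3*A3' - (c1*A1 + c2*A2 + c3*A3)"
      using hu hu' by (simp add: algebra_simps)
    then have "al = ((c1+1)*A1' + c2*A2' + c3*A3' - (c1*A1 + c2*A2 + c3*A3))/f"
      using hf nf by (simp add: eq_divide_eq)
    then show ?thesis using nf ng by (simp add: field_simps) algebra
  qed
  have hb: "(c1+1)*(B1'/g) + c2*(B2'/g) + c3*(B3'/g) - (c1*(B1/g) + c2*(B2/g) + c3*(B3/g)) = be"
  proof -
    have "be*(V'-V) = (c1+1)*B1' + c2*B2' + c3*B3' - (c1*B1 + c2*B2 + c3*B3)"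
      using hv hv' by (simp add: algebra_simps)
    then have "be = ((c1+1)*B1' + c2*B2' + c3*B3' - (c1*B1 + c2*B2 + c3*B3))/g"
      using hg ng by (simp add: eq_divide_eq)
    then show ?thesis using nf ng by (simp add: field_simps) algebra
  qed
  have key: "f*g*(((c1+1)*C1' + c2*C2' + c3*C3') - (c1*C1 + c2*C2 + c3*C3)) = 1 - al - be"
    using P1 E1 E2 E3 ha hb by algebra
  have "((c1+1)*C1' + c2*C2' + c3*C3') - (c1*C1 + c2*C2 + c3*C3) = (1 - al - be)/(f*g)"
    using key nf ng by (simp add: eq_divide_eq mult.commute)
  then show ?thesis using hw by (simp add: algebra_simps)
qed

lemma om2: "omega^2 = -1 - omega"
  by (simp add: omega_def complex_eq_iff power2_eq_square cos_120 sin_120 cos_120' sin_120' field_simps)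

lemma om3: "omega^3 = 1"
proof -
  have s: "omega*omega = -1 - omega" by (metis om2 power2_eq_square)
  have "omega^3 = omega*(omega*omega)" by (simp add: power3_eq_cube)
  also have "\<dots> = omega*(-1-omega)" by (simp only: s)
  also have "\<dots> = -omega - omega*omega" by (simp add: algebra_simps)
  also have "\<dots> = -omega - (-1-omega)" by (simp only: s)
  also have "\<dots> = 1" by simp
  finally show ?thesis .
qed

lemma om_facts: "omega*omega = omega^2" "omega^2*omega = 1" "omega*omega^2 = 1" "omega^2*omega^2 = omega"
    "omega*(omega*d) = omega^2*d" "omega^2*(omega^2*d) = omega*d" "omega*(omega^2*d) = d" "omega^2*(omega*d) = d"
proof -
  show a: "omega*omega = omega^2" by (simp add: power2_eq_square)
  show b: "omega^2*omega = 1" using om3 by (simp add: power3_eq_cube power2_eq_square ac_simps)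
  show c: "omega*omega^2 = 1" using om3 by (simp add: power3_eq_cube power2_eq_square ac_simps)
  show d: "omega^2*omega^2 = omega"
  proof -
    have "omega^2*omega^2 = omega^3*omega" by (simp add: power3_eq_cube power2_eq_square)
    then show ?thesis using om3 by simp
  qed
  show "omega*(omega*d) = omega^2*d" using a by (metis mult.assoc)
  show "omega^2*(omega^2*d) = omega*d" using d by (metis mult.assoc)
  show "omega*(omega^2*d) = d" using c by (metis mult.assoc mult_1)
  show "omega^2*(omega*d) = d" using b by (metis mult.assoc mult_1)
qed

lemma vtx_in: "vtx k l m \<in> lattice" unfolding lattice_def by blast

lemma vtx_steps: "vtx (k+1) l m = vtx k l m + 1" "vtx k (l+1) m = vtx k l m + omega"
  "vtx k l (m+1) = vtx k l m + omega^2"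
  "vtx (k-1) l m = vtx k l m - 1" "vtx k (l-1) m = vtx k l m - omega"
  "vtx k l (m-1) = vtx k l m - omega^2"
  by (simp_all add: vtx_def algebra_simps)

lemma lat_add: assumes "z \<in> lattice" "d \<in> posdir" shows "z + d \<in> lattice" "z - d \<in> lattice"
proof -
  obtain k l m where z: "z = vtx k l m" using assms(1) unfolding lattice_def by blast
  have "d = 1 \<or> d = omega \<or> d = omega^2" using assms(2) unfolding posdir_def by blast
  then show "z + d \<in> lattice" "z - d \<in> lattice"
    by (auto simp: z vtx_steps[symmetric] vtx_in)
qed

lemma posdir_rot: assumes "d \<in> posdir" shows "omega*d \<in> posdir" "omega^2*d \<in> posdir"
proof -
  have "d = 1 \<or> d = omega \<or> d = omega^2" using assms unfolding posdir_def by blast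
  then show "omega*d \<in> posdir" "omega^2*d \<in> posdir"
    using om_facts(1-4) unfolding posdir_def by auto
qed

definition ou :: "(complex \<Rightarrow> complex) \<Rightarrow> complex \<Rightarrow> complex \<Rightarrow> complex" where
  "ou F z d = F (z + d) - F z"
definition iu :: "(complex \<Rightarrow> complex) \<Rightarrow> complex \<Rightarrow> complex \<Rightarrow> complex" where
  "iu F z d = F z - F (z - d)"
definition DD :: "(complex \<Rightarrow> complex) \<Rightarrow> (complex \<Rightarrow> complex) \<Rightarrow> complex \<Rightarrow> complex \<Rightarrow> complex" where
  "DD u v z e = Q (ou u z e) (ou v z e) (iu u z e) (iu v z e)"
definition XA where "XA u v z e = ou u z e * ou v z e * iu u z e / DD u v z e"
definition XB where "XB u v z e = ou v z e * iu u z e * iu v z e / DD u v z e"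
definition XC where "XC u v z e = 1 / DD u v z e"
definition Phi where "Phi u v f g z e = f*g*XC u v z e + XA u v z e / f + XB u v z e / g"

lemma dnm_DD: "dnm u v z 0 3 = DD u v z 1" "dnm u v z 2 5 = DD u v z omega"
  "dnm u v z 4 1 = DD u v z (omega^2)"
  by (simp_all add: dnm_def DD_def Q_def incr_def ou_def iu_def)

lemma incr_conv: "incr F z 0 = ou F z 1" "incr F z 3 = iu F z 1"
  "incr F z 2 = ou F z omega" "incr F z 5 = iu F z omega"
  "incr F z 4 = ou F z (omega^2)" "incr F z 1 = iu F z (omega^2)"
  by (simp_all add: incr_def ou_def iu_def)

context
  fixes u v :: "complex \<Rightarrow> complex"
  assumes nondeg: "\<forall>z\<in>lattice. \<forall>d\<in>posdir. u (z + d) \<noteq> u z \<and> v (z + d) \<noteq> v z"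
    and tri: "\<forall>z1\<in>lattice. \<forall>z2 z3.
        z2 - z1 \<in> posdir \<and> z3 - z2 \<in> posdir \<and> z1 - z3 \<in> posdir \<longrightarrow>
        (u z2 - u z1) / (u z3 - u z2) = (v z3 - v z2) / (v z1 - v z3)"
    and dnz: "\<forall>z\<in>lattice. dnm u v z 0 3 \<noteq> 0 \<and> dnm u v z 2 5 \<noteq> 0 \<and> dnm u v z 4 1 \<noteq> 0"
begin

lemma nz: assumes "z \<in> lattice" "d \<in> posdir" shows "ou u z d \<noteq> 0" "ou v z d \<noteq> 0"
  using nondeg assms unfolding ou_def by auto

lemma DDnz: assumes "z \<in> lattice" "e \<in> posdir" shows "DD u v z e \<noteq> 0"
proof -
  have "e = 1 \<or> e = omega \<or> e = omega^2" using assms(2) unfolding posdir_def by blast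
  moreover have "DD u v z 1 \<noteq> 0 \<and> DD u v z omega \<noteq> 0 \<and> DD u v z (omega^2) \<noteq> 0"
    using dnz assms(1) unfolding dnm_DD by blast
  ultimately show ?thesis by auto
qed

lemma tri_gen:
  assumes z: "z \<in> lattice" and d: "d \<in> posdir" and p: "p \<in> posdir" and e: "e \<in> posdir"
    and cl: "(z - e) - (z + d) = p"
  shows "Q (ou u z d) (ou v z d) (iu u z e) (iu v z e) = 0"
proof -
  have z2: "z + d \<in> lattice" using lat_add z d by blast
  have z3: "z - e \<in> lattice" using lat_add z e by blast
  have t: "(u (z+d) - u z)/(u (z-e) - u (z+d)) = (v (z-e) - v (z+d))/(v z - v (z-e))"
  proof -
    have "(z+d) - z \<in> posdir" "(z - e) - (z+d) \<in> posdir" "z - (z - e) \<in> posdir"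
      using d p e cl by simp_all
    then show ?thesis using tri z by blast
  qed
  have "u (z + d + p) \<noteq> u (z+d)" using nondeg z2 p by blast
  moreover have "z + d + p = z - e" unfolding cl[symmetric] by simp
  ultimately have n1: "u (z-e) - u (z+d) \<noteq> 0" by simp
  have "v (z - e + e) \<noteq> v (z-e)" using nondeg z3 e by blast
  then have n2: "v z - v (z-e) \<noteq> 0" by simp
  have "(u (z+d) - u z)*(v z - v (z-e)) = (v (z-e) - v (z+d))*(u (z-e) - u (z+d))"
    using t n1 n2 by (simp add: frac_eq_eq)
  then show ?thesis unfolding Q_def ou_def iu_def by algebra
qed

lemma T1: assumes z: "z \<in> lattice" and d: "d \<in> posdir" and e: "e = omega^2*d"
  shows "Q (ou u z d) (ou v z d) (iu u z e) (iu v z e) = 0"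
proof (rule tri_gen[OF z d])
  show "omega*d \<in> posdir" "e \<in> posdir" using posdir_rot d e by auto
  show "(z - e) - (z + d) = omega*d" unfolding e om2 by (simp add: algebra_simps)
qed

lemma T2: assumes z: "z \<in> lattice" and d: "d \<in> posdir" and e: "e = omega*d"
  shows "Q (ou u z d) (ou v z d) (iu u z e) (iu v z e) = 0"
proof (rule tri_gen[OF z d])
  show "omega^2*d \<in> posdir" "e \<in> posdir" using posdir_rot d e by auto
  show "(z - e) - (z + d) = omega^2*d" unfolding e om2 by (simp add: algebra_simps)
qed

lemma triv_alg:
  fixes f g a b D :: complex
  assumes nf: "f \<noteq> 0" and ng: "g \<noteq> 0" and nD: "D \<noteq> 0"
  shows "D = f*g+g*a+a*b \<Longrightarrow> f*g*(1/D) + (f*g*a/D)/f + (g*a*b/D)/g = 1"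
    and "D = a*b+b*f+f*g \<Longrightarrow> f*g*(1/D) + (a*b*f/D)/f + (b*f*g/D)/g = 1"
proof -
  assume h: "D = f*g+g*a+a*b"
  have 1: "(f*g*a/D)/f = g*a/D" using nf by simp
  have 2: "(g*a*b/D)/g = a*b/D" using ng by simp
  have "f*g*(1/D) + g*a/D + a*b/D = (f*g+g*a+a*b)/D" by (simp add: add_divide_distrib)
  then show "f*g*(1/D) + (f*g*a/D)/f + (g*a*b/D)/g = 1" unfolding 1 2 h[symmetric] using nD by simp
next
  assume h: "D = a*b+b*f+f*g"
  have 1: "(a*b*f/D)/f = a*b/D" using nf by simp
  have 2: "(b*f*g/D)/g = b*f/D" using ng by simp
  have "f*g*(1/D) + a*b/D + b*f/D = (a*b+b*f+f*g)/D" by (simp add: add_divide_distrib)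
  then show "f*g*(1/D) + (a*b*f/D)/f + (b*f*g/D)/g = 1" unfolding 1 2 h[symmetric] using nD by simp
qed

lemma triv: assumes z: "z \<in> lattice" and d: "d \<in> posdir"
  shows "Phi u v (ou u z d) (ou v z d) z d = 1" "Phi u v (ou u z d) (ou v z d) (z+d) d = 1"
proof -
  have z2: "z + d \<in> lattice" using lat_add z d by blast
  have nf: "ou u z d \<noteq> 0" "ou v z d \<noteq> 0" using nz z d by auto
  have D1: "DD u v z d \<noteq> 0" "DD u v (z+d) d \<noteq> 0" using DDnz z z2 d by auto
  show "Phi u v (ou u z d) (ou v z d) z d = 1"
    unfolding Phi_def XA_def XB_def XC_def
    by (rule triv_alg(1)[OF nf D1(1)]) (simp add: DD_def Q_def)
  have i: "iu u (z+d) d = ou u z d" "iu v (z+d) d = ou v z d" by (simp_all add: iu_def ou_def)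
  show "Phi u v (ou u z d) (ou v z d) (z+d) d = 1"
    unfolding Phi_def XA_def XB_def XC_def i
    by (rule triv_alg(2)[OF nf D1(2)]) (simp add: DD_def Q_def i)
qed


lemma rot1: assumes z: "z \<in> lattice" and d: "d \<in> posdir" and e: "e = omega*d"
  shows "Phi u v (ou u z d) (ou v z d) (z+d) e = Phi u v (ou u z d) (ou v z d) z e"
proof -
  define f g where "f = ou u z d" and "g = ou v z d"
  define f1 g1 where "f1 = iu u z (omega^2*d)" and "g1 = iu v z (omega^2*d)"
  define f2 g2 where "f2 = ou u z e" and "g2 = ou v z e"
  define f5 g5 where "f5 = iu u z e" and "g5 = iu v z e"
  define f5' g5' where "f5' = iu u (z+d) e" and "g5' = iu v (z+d) e"
  have z2: "z + d \<in> lattice" using lat_add z d by blast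
  have ep: "e \<in> posdir" "omega^2*d \<in> posdir" using posdir_rot d e by auto
  have pt1: "z + d + e = z - omega^2*d" unfolding e om2 by (simp add: algebra_simps)
  have pt2: "z + d + omega^2*d = z - e" unfolding e om2 by (simp add: algebra_simps)
  have a: "ou u (z+d) e = -(f+f1)" "ou v (z+d) e = -(g+g1)"
    unfolding ou_def iu_def f_def g_def f1_def g1_def pt1 by simp_all
  have b: "ou u (z+d) (omega^2*d) = -(f+f5)" "ou v (z+d) (omega^2*d) = -(g+g5)"
    unfolding ou_def iu_def f_def g_def f5_def g5_def pt2 by simp_all
  have h05: "Q f g f5 g5 = 0" unfolding f_def g_def f5_def g5_def by (rule T2[OF z d e])
  have h01: "Q f g f1 g1 = 0" unfolding f_def g_def f1_def g1_def by (rule T1[OF z d refl])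
  have h21: "Q f2 g2 f1 g1 = 0" unfolding f2_def g2_def f1_def g1_def
    by (rule T2[OF z ep(1)]) (simp only: e om_facts)
  have h45: "Q (-(f+f5)) (-(g+g5)) f5' g5' = 0" unfolding b[symmetric] f5'_def g5'_def
    by (rule T1[OF z2 ep(2)]) (simp only: e om_facts)
  have nf: "f \<noteq> 0" "g \<noteq> 0" unfolding f_def g_def using nz z d by auto
  have nD: "Q f2 g2 f5 g5 \<noteq> 0" using DDnz[OF z ep(1)]
    unfolding DD_def f2_def g2_def f5_def g5_def .
  have nD': "Q (-(f+f1)) (-(g+g1)) f5' g5' \<noteq> 0" using DDnz[OF z2 ep(1)]
    unfolding DD_def a f5'_def g5'_def .
  have P: "f*g*(1/Q (-(f+f1)) (-(g+g1)) f5' g5')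
     + ((-(f+f1))*(-(g+g1))*f5'/Q (-(f+f1)) (-(g+g1)) f5' g5')/f
     + ((-(g+g1))*f5'*g5'/Q (-(f+f1)) (-(g+g1)) f5' g5')/g
   = f*g*(1/Q f2 g2 f5 g5) + (f2*g2*f5/Q f2 g2 f5 g5)/f + (g2*f5*g5/Q f2 g2 f5 g5)/g"
    by (rule pairlemma[OF h05 h01 h21 h45 nf nD nD'])
  show ?thesis
    using P unfolding Phi_def XA_def XB_def XC_def DD_def a f_def[symmetric] g_def[symmetric]
      f5'_def[symmetric] g5'_def[symmetric] f2_def[symmetric] g2_def[symmetric]
      f5_def[symmetric] g5_def[symmetric] .
qed

lemma rot2: assumes z: "z \<in> lattice" and d: "d \<in> posdir" and e: "e = omega^2*d"
  shows "Phi u v (ou u z d) (ou v z d) (z+d) e = Phi u v (ou u z d) (ou v z d) z e"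
proof -
  define f g where "f = ou u z d" and "g = ou v z d"
  define f1 g1 where "f1 = iu u z (omega*d)" and "g1 = iu v z (omega*d)"
  define f2 g2 where "f2 = ou u z e" and "g2 = ou v z e"
  define f5 g5 where "f5 = iu u z e" and "g5 = iu v z e"
  define f5' g5' where "f5' = iu u (z+d) e" and "g5' = iu v (z+d) e"
  have z2: "z + d \<in> lattice" using lat_add z d by blast
  have ep: "e \<in> posdir" "omega*d \<in> posdir" using posdir_rot d e by auto
  have pt1: "z + d + e = z - omega*d" unfolding e om2 by (simp add: algebra_simps)
  have pt2: "z + d + omega*d = z - e" unfolding e om2 by (simp add: algebra_simps)
  have a: "ou u (z+d) e = -(f+f1)" "ou v (z+d) e = -(g+g1)"
    unfolding ou_def iu_def f_def g_def f1_def g1_def pt1 by simp_all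
  have b: "ou u (z+d) (omega*d) = -(f+f5)" "ou v (z+d) (omega*d) = -(g+g5)"
    unfolding ou_def iu_def f_def g_def f5_def g5_def pt2 by simp_all
  have h05: "Q f g f5 g5 = 0" unfolding f_def g_def f5_def g5_def by (rule T1[OF z d e])
  have h01: "Q f g f1 g1 = 0" unfolding f_def g_def f1_def g1_def by (rule T2[OF z d refl])
  have h21: "Q f2 g2 f1 g1 = 0" unfolding f2_def g2_def f1_def g1_def
    by (rule T1[OF z ep(1)]) (simp only: e om_facts)
  have h45: "Q (-(f+f5)) (-(g+g5)) f5' g5' = 0" unfolding b[symmetric] f5'_def g5'_def
    by (rule T2[OF z2 ep(2)]) (simp only: e om_facts)
  have nf: "f \<noteq> 0" "g \<noteq> 0" unfolding f_def g_def using nz z d by auto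
  have nD: "Q f2 g2 f5 g5 \<noteq> 0" using DDnz[OF z ep(1)]
    unfolding DD_def f2_def g2_def f5_def g5_def .
  have nD': "Q (-(f+f1)) (-(g+g1)) f5' g5' \<noteq> 0" using DDnz[OF z2 ep(1)]
    unfolding DD_def a f5'_def g5'_def .
  have P: "f*g*(1/Q (-(f+f1)) (-(g+g1)) f5' g5')
     + ((-(f+f1))*(-(g+g1))*f5'/Q (-(f+f1)) (-(g+g1)) f5' g5')/f
     + ((-(g+g1))*f5'*g5'/Q (-(f+f1)) (-(g+g1)) f5' g5')/g
   = f*g*(1/Q f2 g2 f5 g5) + (f2*g2*f5/Q f2 g2 f5 g5)/f + (g2*f5*g5/Q f2 g2 f5 g5)/g"
    by (rule pairlemma[OF h05 h01 h21 h45 nf nD nD'])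
  show ?thesis
    using P unfolding Phi_def XA_def XB_def XC_def DD_def a f_def[symmetric] g_def[symmetric]
      f5'_def[symmetric] g5'_def[symmetric] f2_def[symmetric] g2_def[symmetric]
      f5_def[symmetric] g5_def[symmetric] .
qed


lemma step:
  fixes w :: "complex \<Rightarrow> complex" and al be c1 c2 c3 :: complex
  assumes z: "z \<in> lattice" and d: "d \<in> posdir"
    and E2: "Phi u v (ou u z d) (ou v z d) (z+d) e2 = Phi u v (ou u z d) (ou v z d) z e2"
    and E3: "Phi u v (ou u z d) (ou v z d) (z+d) e3 = Phi u v (ou u z d) (ou v z d) z e3"
    and hu': "al*u (z+d) = (c1+1)*XA u v (z+d) d + c2*XA u v (z+d) e2 + c3*XA u v (z+d) e3"
    and hu: "al*u z = c1*XA u v z d + c2*XA u v z e2 + c3*XA u v z e3"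
    and hv': "be*v (z+d) = (c1+1)*XB u v (z+d) d + c2*XB u v (z+d) e2 + c3*XB u v (z+d) e3"
    and hv: "be*v z = c1*XB u v z d + c2*XB u v z e2 + c3*XB u v z e3"
    and hw: "w (z+d) - w z = 1/(ou u z d * ou v z d)"
  shows "(1-al-be)*w (z+d) - ((c1+1)*XC u v (z+d) d + c2*XC u v (z+d) e2 + c3*XC u v (z+d) e3)
       = (1-al-be)*w z - (c1*XC u v z d + c2*XC u v z e2 + c3*XC u v z e3)"
proof (rule step_alg)
  show "ou u z d \<noteq> 0" "ou v z d \<noteq> 0" using nz z d by auto
  show "ou u z d * ou v z d * XC u v (z + d) d + XA u v (z + d) d / ou u z d + XB u v (z + d) d / ou v z d = 1"
    using triv(2)[OF z d] unfolding Phi_def .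
  show "ou u z d * ou v z d * XC u v (z + d) d + XA u v (z + d) d / ou u z d + XB u v (z + d) d / ou v z d =
    ou u z d * ou v z d * XC u v z d + XA u v z d / ou u z d + XB u v z d / ou v z d"
    using triv[OF z d] unfolding Phi_def by simp
  show "ou u z d * ou v z d * XC u v (z + d) e2 + XA u v (z + d) e2 / ou u z d + XB u v (z + d) e2 / ou v z d =
    ou u z d * ou v z d * XC u v z e2 + XA u v z e2 / ou u z d + XB u v z e2 / ou v z d"
    using E2 unfolding Phi_def .
  show "ou u z d * ou v z d * XC u v (z + d) e3 + XA u v (z + d) e3 / ou u z d + XB u v (z + d) e3 / ou v z d =
    ou u z d * ou v z d * XC u v z e3 + XA u v z e3 / ou u z d + XB u v z e3 / ou v z d"
    using E3 unfolding Phi_def .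
  show "u (z + d) - u z = ou u z d" "v (z + d) - v z = ou v z d" by (simp_all add: ou_def)
qed (use hu' hu hv' hv hw in auto)

end

lemma int_shift:
  fixes h :: "int \<Rightarrow> complex"
  assumes "\<And>k. h (k+1) = h k"
  shows "h k = h 0"
proof (induction k rule: int_induct[where k=0])
  case base then show ?case by simp
next
  case (step1 i) then show ?case using assms[of i] by simp
next
  case (step2 i) then show ?case using assms[of "i-1"] by simp
qed

theorem proposition16:
  fixes u v w :: "complex \<Rightarrow> complex" and \<alpha> \<beta> :: complex
  assumes u0: "u 0 = 0" and v0: "v 0 = 0" and w0: "w 0 = 0"
    and nondeg: "\<forall>z\<in>lattice. \<forall>d\<in>posdir. u (z + d) \<noteq> u z \<and> v (z + d) \<noteq> v z"
    and wdef: "\<forall>z\<in>lattice. \<forall>d\<in>posdir.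
        w (z + d) - w z = 1 / ((u (z + d) - u z) * (v (z + d) - v z))"
    and tri: "\<forall>z1\<in>lattice. \<forall>z2 z3.
        z2 - z1 \<in> posdir \<and> z3 - z2 \<in> posdir \<and> z1 - z3 \<in> posdir \<longrightarrow>
        (u z2 - u z1) / (u z3 - u z2) = (v z3 - v z2) / (v z1 - v z3)"
    and dnz: "\<forall>z\<in>lattice. dnm u v z 0 3 \<noteq> 0 \<and> dnm u v z 2 5 \<noteq> 0 \<and> dnm u v z 4 1 \<noteq> 0"
    and cu: "\<forall>k l m. \<alpha> * u (vtx k l m) =
        of_int k * (incr u (vtx k l m) 0 * incr v (vtx k l m) 0 * incr u (vtx k l m) 3)
                     / dnm u v (vtx k l m) 0 3
      + of_int l * (incr u (vtx k l m) 2 * incr v (vtx k l m) 2 * incr u (vtx k l m) 5)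
                     / dnm u v (vtx k l m) 2 5
      + of_int m * (incr u (vtx k l m) 4 * incr v (vtx k l m) 4 * incr u (vtx k l m) 1)
                     / dnm u v (vtx k l m) 4 1"
    and cv: "\<forall>k l m. \<beta> * v (vtx k l m) =
        of_int k * (incr v (vtx k l m) 0 * incr u (vtx k l m) 3 * incr v (vtx k l m) 3)
                     / dnm u v (vtx k l m) 0 3
      + of_int l * (incr v (vtx k l m) 2 * incr u (vtx k l m) 5 * incr v (vtx k l m) 5)
                     / dnm u v (vtx k l m) 2 5
      + of_int m * (incr v (vtx k l m) 4 * incr u (vtx k l m) 1 * incr v (vtx k l m) 1)
                     / dnm u v (vtx k l m) 4 1"
  shows "\<forall>k l m. (1 - \<alpha> - \<beta>) * w (vtx k l m) =
        of_int k / dnm u v (vtx k l m) 0 3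
      + of_int l / dnm u v (vtx k l m) 2 5
      + of_int m / dnm u v (vtx k l m) 4 1"
proof -
  note ctx = nondeg tri dnz
  have CU: "\<alpha> * u (vtx k l m) = of_int k * XA u v (vtx k l m) 1 + of_int l * XA u v (vtx k l m) omega
      + of_int m * XA u v (vtx k l m) (omega^2)" for k l m
    using cu[rule_format, of k l m] unfolding incr_conv dnm_DD XA_def by simp
  have CV: "\<beta> * v (vtx k l m) = of_int k * XB u v (vtx k l m) 1 + of_int l * XB u v (vtx k l m) omega
      + of_int m * XB u v (vtx k l m) (omega^2)" for k l m
    using cv[rule_format, of k l m] unfolding incr_conv dnm_DD XB_def by simp
  define G where "G k l m = (1 - \<alpha> - \<beta>) * w (vtx k l m) - (of_int k * XC u v (vtx k l m) 1
      + of_int l * XC u v (vtx k l m) omega + of_int m * XC u v (vtx k l m) (omega^2))" for k l m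
  have p1: "(1::complex) \<in> posdir" "omega \<in> posdir" "omega^2 \<in> posdir" unfolding posdir_def by auto
  have W: "w (z+d) - w z = 1/(ou u z d * ou v z d)" if "z \<in> lattice" "d \<in> posdir" for z d
    using wdef that unfolding ou_def by auto
  have Gk: "G (k+1) l m = G k l m" for k l m
  proof -
    have "(1 - \<alpha> - \<beta>) * w (vtx k l m + 1) - ((of_int k + 1) * XC u v (vtx k l m + 1) 1
       + of_int l * XC u v (vtx k l m + 1) omega + of_int m * XC u v (vtx k l m + 1) (omega^2))
       = (1 - \<alpha> - \<beta>) * w (vtx k l m) - (of_int k * XC u v (vtx k l m) 1
       + of_int l * XC u v (vtx k l m) omega + of_int m * XC u v (vtx k l m) (omega^2))"
    proof (rule step[OF ctx vtx_in p1(1)])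
      show "Phi u v (ou u (vtx k l m) 1) (ou v (vtx k l m) 1) (vtx k l m + 1) omega =
            Phi u v (ou u (vtx k l m) 1) (ou v (vtx k l m) 1) (vtx k l m) omega"
        by (rule rot1[OF ctx vtx_in p1(1)]) simp
      show "Phi u v (ou u (vtx k l m) 1) (ou v (vtx k l m) 1) (vtx k l m + 1) (omega^2) =
            Phi u v (ou u (vtx k l m) 1) (ou v (vtx k l m) 1) (vtx k l m) (omega^2)"
        by (rule rot2[OF ctx vtx_in p1(1)]) simp
      show "\<alpha> * u (vtx k l m + 1) = (of_int k + 1) * XA u v (vtx k l m + 1) 1
          + of_int l * XA u v (vtx k l m + 1) omega + of_int m * XA u v (vtx k l m + 1) (omega^2)"
        using CU[of "k+1" l m] unfolding vtx_steps by simp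
      show "\<beta> * v (vtx k l m + 1) = (of_int k + 1) * XB u v (vtx k l m + 1) 1
          + of_int l * XB u v (vtx k l m + 1) omega + of_int m * XB u v (vtx k l m + 1) (omega^2)"
        using CV[of "k+1" l m] unfolding vtx_steps by simp
    qed (use CU CV W[OF vtx_in p1(1)] in auto)
    then show ?thesis unfolding G_def vtx_steps by simp
  qed
  have Gl: "G k (l+1) m = G k l m" for k l m
  proof -
    have "(1 - \<alpha> - \<beta>) * w (vtx k l m + omega) - ((of_int l + 1) * XC u v (vtx k l m + omega) omega
       + of_int k * XC u v (vtx k l m + omega) 1 + of_int m * XC u v (vtx k l m + omega) (omega^2))
       = (1 - \<alpha> - \<beta>) * w (vtx k l m) - (of_int l * XC u v (vtx k l m) omega
       + of_int k * XC u v (vtx k l m) 1 + of_int m * XC u v (vtx k l m) (omega^2))"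
    proof (rule step[OF ctx vtx_in p1(2)])
      show "Phi u v (ou u (vtx k l m) omega) (ou v (vtx k l m) omega) (vtx k l m + omega) 1 =
            Phi u v (ou u (vtx k l m) omega) (ou v (vtx k l m) omega) (vtx k l m) 1"
        by (rule rot2[OF ctx vtx_in p1(2)]) (simp only: om_facts)
      show "Phi u v (ou u (vtx k l m) omega) (ou v (vtx k l m) omega) (vtx k l m + omega) (omega^2) =
            Phi u v (ou u (vtx k l m) omega) (ou v (vtx k l m) omega) (vtx k l m) (omega^2)"
        by (rule rot1[OF ctx vtx_in p1(2)]) (simp only: om_facts)
      show "\<alpha> * u (vtx k l m + omega) = (of_int l + 1) * XA u v (vtx k l m + omega) omega
          + of_int k * XA u v (vtx k l m + omega) 1 + of_int m * XA u v (vtx k l m + omega) (omega^2)"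
        using CU[of k "l+1" m] unfolding vtx_steps by (simp add: algebra_simps)
      show "\<beta> * v (vtx k l m + omega) = (of_int l + 1) * XB u v (vtx k l m + omega) omega
          + of_int k * XB u v (vtx k l m + omega) 1 + of_int m * XB u v (vtx k l m + omega) (omega^2)"
        using CV[of k "l+1" m] unfolding vtx_steps by (simp add: algebra_simps)
      show "\<alpha> * u (vtx k l m) = of_int l * XA u v (vtx k l m) omega
          + of_int k * XA u v (vtx k l m) 1 + of_int m * XA u v (vtx k l m) (omega^2)"
        using CU[of k l m] by (simp add: algebra_simps)
      show "\<beta> * v (vtx k l m) = of_int l * XB u v (vtx k l m) omega
          + of_int k * XB u v (vtx k l m) 1 + of_int m * XB u v (vtx k l m) (omega^2)"
        using CV[of k l m] by (simp add: algebra_simps)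
    qed (use W[OF vtx_in p1(2)] in auto)
    then show ?thesis unfolding G_def vtx_steps by (simp add: algebra_simps)
  qed
  have Gm: "G k l (m+1) = G k l m" for k l m
  proof -
    have "(1 - \<alpha> - \<beta>) * w (vtx k l m + omega^2) - ((of_int m + 1) * XC u v (vtx k l m + omega^2) (omega^2)
       + of_int k * XC u v (vtx k l m + omega^2) 1 + of_int l * XC u v (vtx k l m + omega^2) omega)
       = (1 - \<alpha> - \<beta>) * w (vtx k l m) - (of_int m * XC u v (vtx k l m) (omega^2)
       + of_int k * XC u v (vtx k l m) 1 + of_int l * XC u v (vtx k l m) omega)"
    proof (rule step[OF ctx vtx_in p1(3)])
      show "Phi u v (ou u (vtx k l m) (omega^2)) (ou v (vtx k l m) (omega^2)) (vtx k l m + omega^2) 1 =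
            Phi u v (ou u (vtx k l m) (omega^2)) (ou v (vtx k l m) (omega^2)) (vtx k l m) 1"
        by (rule rot1[OF ctx vtx_in p1(3)]) (simp only: om_facts)
      show "Phi u v (ou u (vtx k l m) (omega^2)) (ou v (vtx k l m) (omega^2)) (vtx k l m + omega^2) omega =
            Phi u v (ou u (vtx k l m) (omega^2)) (ou v (vtx k l m) (omega^2)) (vtx k l m) omega"
        by (rule rot2[OF ctx vtx_in p1(3)]) (simp only: om_facts)
      show "\<alpha> * u (vtx k l m + omega^2) = (of_int m + 1) * XA u v (vtx k l m + omega^2) (omega^2)
          + of_int k * XA u v (vtx k l m + omega^2) 1 + of_int l * XA u v (vtx k l m + omega^2) omega"
        using CU[of k l "m+1"] unfolding vtx_steps by (simp add: algebra_simps)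
      show "\<beta> * v (vtx k l m + omega^2) = (of_int m + 1) * XB u v (vtx k l m + omega^2) (omega^2)
          + of_int k * XB u v (vtx k l m + omega^2) 1 + of_int l * XB u v (vtx k l m + omega^2) omega"
        using CV[of k l "m+1"] unfolding vtx_steps by (simp add: algebra_simps)
      show "\<alpha> * u (vtx k l m) = of_int m * XA u v (vtx k l m) (omega^2)
          + of_int k * XA u v (vtx k l m) 1 + of_int l * XA u v (vtx k l m) omega"
        using CU[of k l m] by (simp add: algebra_simps)
      show "\<beta> * v (vtx k l m) = of_int m * XB u v (vtx k l m) (omega^2)
          + of_int k * XB u v (vtx k l m) 1 + of_int l * XB u v (vtx k l m) omega"
        using CV[of k l m] by (simp add: algebra_simps)
    qed (use W[OF vtx_in p1(3)] in auto)
    then show ?thesis unfolding G_def vtx_steps by (simp add: algebra_simps)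
  qed
  have G0: "G 0 0 0 = 0" unfolding G_def using w0 by (simp add: vtx_def)
  have "G k l m = 0" for k l m
  proof -
    have "G k l m = G 0 l m" using int_shift[of "\<lambda>k. G k l m"] Gk by blast
    also have "\<dots> = G 0 0 m" using int_shift[of "\<lambda>l. G 0 l m"] Gl by blast
    also have "\<dots> = G 0 0 0" using int_shift[of "\<lambda>m. G 0 0 m"] Gm by blast
    finally show ?thesis using G0 by simp
  qed
  then show ?thesis unfolding G_def XC_def dnm_DD by (simp add: algebra_simps)
qed

end
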